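(* Let $p\in\mathbb{C}[z_1,\dots,z_d]$ have total degree $n$ and no zeros in $\mathbb{D}^d$, and suppose $p$ vanishes to order $M$ at $u=(1,\dots,1)$, so that $p(u-\zeta)=\sum_{j=M}^nP_j(\zeta)$ with each $P_j$ a homogeneous polynomial of degree $j$ and $P_M\neq0$. Then $P_M$ has no zeros in $\{\zeta\in\mathbb{C}:\mathrm{Re}\,\zeta>0\}^d$.
   Context: $\mathbb{D}$ denotes the open unit disk in $\mathbb{C}$. *)

theory Defs
  imports "HOL-Analysis.Analysis"
begin

text \<open>Polynomials in d variables over C, represented by coefficient functions on
multi-indices alpha :: 'd => nat (the dimension d is the cardinality of the finite type 'd).\<close>

definition is_mpoly :: "(('d::finite \<Rightarrow> nat) \<Rightarrow> complex) \<Rightarrow> bool" where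
  "is_mpoly c \<longleftrightarrow> finite {\<alpha>. c \<alpha> \<noteq> 0}"

definition monom_eval :: "('d::finite \<Rightarrow> nat) \<Rightarrow> complex^'d \<Rightarrow> complex" where
  "monom_eval \<alpha> z = (\<Prod>i\<in>UNIV. (z$i) ^ (\<alpha> i))"

definition mdeg :: "('d::finite \<Rightarrow> nat) \<Rightarrow> nat" where
  "mdeg \<alpha> = (\<Sum>i\<in>UNIV. \<alpha> i)"

definition peval :: "(('d::finite \<Rightarrow> nat) \<Rightarrow> complex) \<Rightarrow> complex^'d \<Rightarrow> complex" where
  "peval c z = (\<Sum>\<alpha>\<in>{\<alpha>. c \<alpha> \<noteq> 0}. c \<alpha> * monom_eval \<alpha> z)"

definition total_degree :: "(('d::finite \<Rightarrow> nat) \<Rightarrow> complex) \<Rightarrow> nat" where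
  "total_degree c = Max (mdeg ` {\<alpha>. c \<alpha> \<noteq> 0})"

definition hom_part :: "(('d::finite \<Rightarrow> nat) \<Rightarrow> complex) \<Rightarrow> nat \<Rightarrow> (('d \<Rightarrow> nat) \<Rightarrow> complex)" where
  "hom_part c j = (\<lambda>\<alpha>. if mdeg \<alpha> = j then c \<alpha> else 0)"

end

theory Submission
  imports Defs "HOL-Complex_Analysis.Complex_Analysis"
begin
no_notation fps_nth (infixl \<open>$\<close> 75)
lemma peval_superset:
  assumes "finite A" "{\<alpha>. c \<alpha> \<noteq> 0} \<subseteq> A"
  shows "peval c z = (\<Sum>\<alpha>\<in>A. c \<alpha> * monom_eval \<alpha> z)"
  unfolding peval_def
  by (rule sum.mono_neutral_left[OF assms]) auto

lemma monom_split:
  "monom_eval \<alpha> z = (z$x)^(\<alpha> x) * monom_eval (\<alpha>(x:=0)) z"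
proof -
  have "monom_eval \<alpha> z = (z$x)^(\<alpha> x) * (\<Prod>i\<in>UNIV-{x}. (z$i)^(\<alpha> i))"
    unfolding monom_eval_def by (rule prod.remove) auto
  moreover have "monom_eval (\<alpha>(x:=0)) z = 1 * (\<Prod>i\<in>UNIV-{x}. (z$i)^(\<alpha> i))"
    unfolding monom_eval_def by (subst prod.remove[of _ x]) auto
  ultimately show ?thesis by simp
qed

lemma monom_cong:
  assumes "\<And>i. \<alpha> i \<noteq> 0 \<Longrightarrow> z$i = z'$i"
  shows "monom_eval \<alpha> z = monom_eval \<alpha> z'"
  unfolding monom_eval_def
proof (rule prod.cong[OF refl])
  fix i show "(z$i)^(\<alpha> i) = (z'$i)^(\<alpha> i)" by (cases "\<alpha> i = 0") (simp_all add: assms)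
qed

lemma mpoly_zero_aux:
  fixes V :: "'d::finite set"
  assumes "finite V"
  shows "\<forall>c. is_mpoly c \<longrightarrow> (\<forall>\<alpha>. c \<alpha> \<noteq> 0 \<longrightarrow> (\<forall>i. i \<notin> V \<longrightarrow> \<alpha> i = 0))
     \<longrightarrow> (\<forall>z. peval c z = 0) \<longrightarrow> (\<forall>\<alpha>. c \<alpha> = 0)"
  using assms
proof (induction V rule: finite_induct)
  case empty
  show ?case
  proof (intro allI impI)
    fix c :: "('d \<Rightarrow> nat) \<Rightarrow> complex" and \<alpha>
    assume c: "is_mpoly c" "\<forall>\<alpha>. c \<alpha> \<noteq> 0 \<longrightarrow> (\<forall>i. i \<notin> {} \<longrightarrow> \<alpha> i = 0)"
      "\<forall>z. peval c z = 0"
    have sub: "{\<alpha>. c \<alpha> \<noteq> 0} \<subseteq> {\<lambda>_. 0}" using c(2) by auto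
    have "peval c (0::complex^'d) = c (\<lambda>_. 0) * monom_eval (\<lambda>_::'d. 0) (0::complex^'d)"
      using peval_superset[OF _ sub, of 0] by simp
    then have "c (\<lambda>_. 0) = 0" using c(3) by (simp add: monom_eval_def)
    then show "c \<alpha> = 0" using sub by blast
  qed
next
  case (insert x V)
  show ?case
  proof (intro allI impI)
    fix c :: "('d \<Rightarrow> nat) \<Rightarrow> complex" and \<alpha>0
    assume c: "is_mpoly c" "\<forall>\<alpha>. c \<alpha> \<noteq> 0 \<longrightarrow> (\<forall>i. i \<notin> insert x V \<longrightarrow> \<alpha> i = 0)"
      "\<forall>z. peval c z = 0"
    define F where "F = {\<alpha>. c \<alpha> \<noteq> 0}"
    have finF: "finite F" using c(1) by (simp add: F_def is_mpoly_def)
    define N where "N = (\<Sum>\<alpha>\<in>F. \<alpha> x)"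
    have leN: "\<alpha> x \<le> N" if "\<alpha> \<in> F" for \<alpha>
      unfolding N_def by (rule member_le_sum[OF that _ finF]) auto
    define ck where "ck k = (\<lambda>\<beta>. if \<beta> x = 0 then c (\<beta>(x:=k)) else 0)" for k
    have supp: "{\<beta>. ck k \<beta> \<noteq> 0} = (\<lambda>\<alpha>. \<alpha>(x:=0)) ` {\<alpha>\<in>F. \<alpha> x = k}" for k
    proof (rule set_eqI, rule iffI)
      fix \<beta> assume "\<beta> \<in> {\<beta>. ck k \<beta> \<noteq> 0}"
      then have "\<beta> x = 0" "c (\<beta>(x:=k)) \<noteq> 0" by (auto simp: ck_def split: if_splits)
      then show "\<beta> \<in> (\<lambda>\<alpha>. \<alpha>(x:=0)) ` {\<alpha>\<in>F. \<alpha> x = k}"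
        by (intro image_eqI[of _ _ "\<beta>(x:=k)"]) (auto simp: F_def)
    qed (auto simp: ck_def F_def)
    have finck: "finite {\<beta>. ck k \<beta> \<noteq> 0}" for k
      unfolding supp using finF by simp
    have inj: "inj_on (\<lambda>\<alpha>. \<alpha>(x:=0)) {\<alpha>\<in>F. \<alpha> x = k}" for k
    proof (rule inj_onI)
      fix a1 a2 assume "a1 \<in> {\<alpha>\<in>F. \<alpha> x = k}" "a2 \<in> {\<alpha>\<in>F. \<alpha> x = k}" "a1(x:=0) = a2(x:=0)"
      show "a1 = a2"
      proof (rule ext)
        fix i show "a1 i = a2 i"
          using \<open>a1 \<in> _\<close> \<open>a2 \<in> _\<close> fun_cong[OF \<open>a1(x:=0) = a2(x:=0)\<close>, of i]
          by (cases "i = x") auto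
      qed
    qed
    have inner: "(\<Sum>\<alpha>\<in>{\<alpha>\<in>F. \<alpha> x = k}. c \<alpha> * monom_eval \<alpha> z) = (z$x)^k * peval (ck k) z" for k z
    proof -
      have "peval (ck k) z = (\<Sum>\<beta>\<in>(\<lambda>\<alpha>. \<alpha>(x:=0)) ` {\<alpha>\<in>F. \<alpha> x = k}. ck k \<beta> * monom_eval \<beta> z)"
        unfolding peval_def supp ..
      also have "\<dots> = (\<Sum>\<alpha>\<in>{\<alpha>\<in>F. \<alpha> x = k}. ck k (\<alpha>(x:=0)) * monom_eval (\<alpha>(x:=0)) z)"
        by (rule sum.reindex[OF inj, unfolded comp_def])
      also have "\<dots> = (\<Sum>\<alpha>\<in>{\<alpha>\<in>F. \<alpha> x = k}. c \<alpha> * monom_eval (\<alpha>(x:=0)) z)"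
        by (rule sum.cong) (auto simp: ck_def)
      finally have e: "peval (ck k) z = (\<Sum>\<alpha>\<in>{\<alpha>\<in>F. \<alpha> x = k}. c \<alpha> * monom_eval (\<alpha>(x:=0)) z)" .
      have "(\<Sum>\<alpha>\<in>{\<alpha>\<in>F. \<alpha> x = k}. c \<alpha> * monom_eval \<alpha> z)
          = (\<Sum>\<alpha>\<in>{\<alpha>\<in>F. \<alpha> x = k}. (z$x)^k * (c \<alpha> * monom_eval (\<alpha>(x:=0)) z))"
      proof (rule sum.cong[OF refl])
        fix \<alpha> assume "\<alpha> \<in> {\<alpha>\<in>F. \<alpha> x = k}"
        then show "c \<alpha> * monom_eval \<alpha> z = (z$x)^k * (c \<alpha> * monom_eval (\<alpha>(x:=0)) z)"
          using monom_split[of \<alpha> z x] by simp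
      qed
      then show ?thesis unfolding e sum_distrib_left .
    qed
    have key: "peval c z = (\<Sum>k\<le>N. peval (ck k) z * (z$x)^k)" for z
    proof -
      have "peval c z = (\<Sum>\<alpha>\<in>F. c \<alpha> * monom_eval \<alpha> z)" by (simp add: peval_def F_def)
      also have "\<dots> = (\<Sum>k\<le>N. \<Sum>\<alpha>\<in>{\<alpha>\<in>F. \<alpha> x = k}. c \<alpha> * monom_eval \<alpha> z)"
        by (rule sum.group[symmetric]) (use finF leN in auto)
      finally show ?thesis by (simp add: inner mult.commute)
    qed
    have ck0: "peval (ck k) z = 0" if "k \<le> N" for k z
    proof -
      define zy where "zy y = (\<chi> i. if i = x then y else z$i)" for y
      have "peval (ck k') (zy y) = peval (ck k') z" for k' y
        unfolding peval_def
      proof (rule sum.cong[OF refl])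
        fix \<beta> assume "\<beta> \<in> {\<beta>. ck k' \<beta> \<noteq> 0}"
        then have bx: "\<beta> x = 0" by (simp add: ck_def split: if_splits)
        have "monom_eval \<beta> (zy y) = monom_eval \<beta> z"
        proof (rule monom_cong)
          fix i assume "\<beta> i \<noteq> 0"
          then have "i \<noteq> x" using bx by auto
          then show "zy y $ i = z $ i" by (simp add: zy_def)
        qed
        then show "ck k' \<beta> * monom_eval \<beta> (zy y) = ck k' \<beta> * monom_eval \<beta> z" by simp
      qed
      moreover have "(zy y)$x = y" for y by (simp add: zy_def)
      ultimately have "\<forall>y. (\<Sum>k\<le>N. peval (ck k) z * y^k) = 0"
      proof -
        assume h1: "\<And>k' y. peval (ck k') (zy y) = peval (ck k') z" and h2: "\<And>y. (zy y)$x = y"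
        show ?thesis
        proof
          fix y
          have "peval c (zy y) = (\<Sum>k\<le>N. peval (ck k) (zy y) * ((zy y)$x)^k)" by (rule key)
          then show "(\<Sum>k\<le>N. peval (ck k) z * y^k) = 0" using c(3) by (simp add: h1 h2)
        qed
      qed
      then have "\<forall>k'. k' \<le> N \<longrightarrow> peval (ck k') z = 0"
        using polyfun_eq_0[of "\<lambda>k. peval (ck k) z" N] by blast
      then show ?thesis using that by blast
    qed
    have ckz: "ck k = (\<lambda>_. 0)" if "k \<le> N" for k
    proof -
      have "is_mpoly (ck k)" using finck by (simp add: is_mpoly_def)
      moreover have "\<forall>\<beta>. ck k \<beta> \<noteq> 0 \<longrightarrow> (\<forall>i. i \<notin> V \<longrightarrow> \<beta> i = 0)"
      proof (intro allI impI)
        fix \<beta> i assume "ck k \<beta> \<noteq> 0" "i \<notin> V"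
        then have "\<beta> x = 0" "c (\<beta>(x:=k)) \<noteq> 0" by (auto simp: ck_def split: if_splits)
        show "\<beta> i = 0"
        proof (cases "i = x")
          case True then show ?thesis using \<open>\<beta> x = 0\<close> by simp
        next
          case False
          then have "(\<beta>(x:=k)) i = 0" using c(2) \<open>i \<notin> V\<close> \<open>c (\<beta>(x:=k)) \<noteq> 0\<close> by blast
          then show ?thesis using False by simp
        qed
      qed
      ultimately show ?thesis using insert.IH ck0[OF that] by blast
    qed
    show "c \<alpha>0 = 0"
    proof (rule ccontr)
      assume "c \<alpha>0 \<noteq> 0"
      then have "\<alpha>0 \<in> F" by (simp add: F_def)
      then have "ck (\<alpha>0 x) (\<alpha>0(x:=0)) = 0" using ckz[OF leN] by simp
      then show False using \<open>c \<alpha>0 \<noteq> 0\<close> by (simp add: ck_def)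
    qed
  qed
qed

lemma mpoly_nonzero:
  fixes c :: "('d::finite \<Rightarrow> nat) \<Rightarrow> complex"
  assumes "is_mpoly c" "c \<noteq> (\<lambda>_. 0)"
  shows "\<exists>z. peval c z \<noteq> 0"
  using mpoly_zero_aux[of "UNIV::'d set"] assms by auto

lemma monom_scale:
  "monom_eval \<alpha> (\<chi> i. a * z$i) = a^(mdeg \<alpha>) * monom_eval \<alpha> z"
  unfolding monom_eval_def mdeg_def
  by (simp add: power_mult_distrib prod.distrib power_sum)

lemma peval_scale_hom:
  assumes "\<forall>\<alpha>. c \<alpha> \<noteq> 0 \<longrightarrow> mdeg \<alpha> = M"
  shows "peval c (\<chi> i. a * z$i) = a^M * peval c z"
  unfolding peval_def monom_scale sum_distrib_left
  by (rule sum.cong[OF refl]) (use assms in auto)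

lemma disk_scale:
  fixes w :: complex
  assumes "norm (1 - w) < 1" "0 < t" "t \<le> 1"
  shows "norm (1 - of_real t * w) < 1"
proof -
  have "1 - of_real t * w = of_real (1 - t) + of_real t * (1 - w)" by (simp add: algebra_simps)
  then have "norm (1 - of_real t * w) \<le> (1 - t) + t * norm (1 - w)"
    using assms by (metis abs_of_nonneg diff_ge_0_iff_ge less_eq_real_def norm_mult norm_of_real norm_triangle_ineq)
  also have "\<dots> < 1" using assms by (smt (verit) mult_less_cancel_left2)
  finally show ?thesis .
qed

lemma small_scale:
  fixes z :: complex
  assumes "0 < Re z" "0 < s" "s * (norm z)^2 \<le> Re z"
  shows "norm (1 - of_real s * z) < 1"
proof -
  have "(norm (1 - of_real s * z))^2 = (1 - s * Re z)^2 + (s * Im z)^2"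
    by (simp add: cmod_power2)
  also have "\<dots> = 1 - 2 * s * Re z + s * (s * (norm z)^2)"
    unfolding cmod_power2 by (simp add: power2_eq_square algebra_simps)
  also have "\<dots> \<le> 1 - 2 * s * Re z + s * Re z"
    using assms by (simp add: mult_left_mono)
  also have "\<dots> < 1" using assms by simp
  finally have "(norm (1 - of_real s * z))^2 < 1^2" by simp
  then show ?thesis by (rule power_less_imp_less_base) simp
qed

theorem theorem14p1:
  fixes c b :: "('d::finite \<Rightarrow> nat) \<Rightarrow> complex" and n M :: nat
  assumes "is_mpoly c"
    and "total_degree c = n"
    and "\<forall>z::complex^'d. (\<forall>i. norm (z$i) < 1) \<longrightarrow> peval c z \<noteq> 0"
    and "is_mpoly b"
    and "\<forall>\<zeta>. peval b \<zeta> = peval c ((\<chi> i. 1) - \<zeta>)"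
    and "\<forall>\<alpha>. b \<alpha> \<noteq> 0 \<longrightarrow> M \<le> mdeg \<alpha>"
    and "hom_part b M \<noteq> (\<lambda>_. 0)"
  shows "\<forall>\<zeta>::complex^'d. (\<forall>i. Re (\<zeta>$i) > 0) \<longrightarrow> peval (hom_part b M) \<zeta> \<noteq> 0"
proof (intro allI impI)
  fix \<zeta> :: "complex^'d" assume pos: "\<forall>i. Re (\<zeta>$i) > 0"
  define H where "H = hom_part b M"
  define Fb where "Fb = {\<alpha>. b \<alpha> \<noteq> 0}"
  have finFb: "finite Fb" using assms(4) by (simp add: is_mpoly_def Fb_def)
  have Hsub: "{\<alpha>. H \<alpha> \<noteq> 0} \<subseteq> Fb" by (auto simp: H_def hom_part_def Fb_def)
  have isH: "is_mpoly H" using finite_subset[OF Hsub finFb] by (simp add: is_mpoly_def)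
  have Hdeg: "\<forall>\<alpha>. H \<alpha> \<noteq> 0 \<longrightarrow> mdeg \<alpha> = M" by (auto simp: H_def hom_part_def)
  have Om: "peval b w \<noteq> 0" if "\<forall>i. norm (1 - w$i) < 1" for w :: "complex^'d"
    using assms(3)[rule_format, of "(\<chi> i. 1) - w"] assms(5) that by simp
  show "peval (hom_part b M) \<zeta> \<noteq> 0"
  proof
    assume P0: "peval (hom_part b M) \<zeta> = 0"
    define s where "s = Min ((\<lambda>i. Re (\<zeta>$i) / (norm (\<zeta>$i))^2) ` UNIV)"
    have znz: "\<zeta>$i \<noteq> 0" for i using pos by (metis less_irrefl zero_complex.simps(1))
    have spos: "s > 0" unfolding s_def using pos znz by (subst Min_gr_iff) auto
    have sle: "s * (norm (\<zeta>$i))^2 \<le> Re (\<zeta>$i)" for i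
    proof -
      have "s \<le> Re (\<zeta>$i) / (norm (\<zeta>$i))^2" unfolding s_def by (rule Min_le) auto
      then show ?thesis using znz[of i] by (simp add: pos_le_divide_eq)
    qed
    define z0 where "z0 = (\<chi> i. of_real s * \<zeta>$i)"
    have z0Om: "norm (1 - z0$i) < 1" for i
      unfolding z0_def using small_scale[OF _ spos sle] pos by simp
    have Pz0: "peval H z0 = 0"
      unfolding z0_def using peval_scale_hom[OF Hdeg] P0 H_def by simp
    have Hnz: "H \<noteq> (\<lambda>_. 0)" using assms(7) H_def by simp
    obtain w where w: "peval H w \<noteq> 0" using mpoly_nonzero[OF isH Hnz] by blast
    define v where "v = w - z0"
    define S where "S = {l::complex. \<forall>i. norm (1 - (z0$i + l * v$i)) < 1}"
    define q where "q l = (\<chi> i. z0$i + l * v$i)" for l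
    define mon where "mon \<alpha> l = (\<Prod>i\<in>UNIV. (z0$i + l * v$i)^(\<alpha> i))" for \<alpha> l
    have monq: "monom_eval \<alpha> (q l) = mon \<alpha> l" for \<alpha> l by (simp add: monom_eval_def q_def mon_def)
    define g where "g l = (\<Sum>\<alpha>\<in>Fb. H \<alpha> * mon \<alpha> l)" for l
    have g_eq: "g l = peval H (q l)" for l
      unfolding g_def peval_superset[OF finFb Hsub] monq ..
    define t where "t n = 1 / real (Suc n)" for n
    define Fn where "Fn n l = (\<Sum>\<alpha>\<in>Fb. b \<alpha> * of_real (t n) ^ (mdeg \<alpha> - M) * mon \<alpha> l)" for n l
    have q0: "q 0 = z0" by (simp add: q_def vec_eq_iff)
    have q1: "q 1 = w" by (simp add: q_def vec_eq_iff v_def)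
    have g0: "g 0 = 0" using g_eq[of 0] q0 Pz0 by simp
    have g1: "g 1 \<noteq> 0" using g_eq[of 1] q1 w by simp
    have Fn_nz: "Fn n l \<noteq> 0" if "l \<in> S" for n l
    proof -
      have tpos: "0 < t n" "t n \<le> 1" by (auto simp: t_def)
      have "peval b (\<chi> i. of_real (t n) * (q l)$i) = (\<Sum>\<alpha>\<in>Fb. b \<alpha> * (of_real (t n) ^ (mdeg \<alpha>) * mon \<alpha> l))"
        unfolding peval_def Fb_def monom_scale monq ..
      also have "\<dots> = of_real (t n) ^ M * Fn n l"
        unfolding Fn_def sum_distrib_left
      proof (rule sum.cong[OF refl])
        fix \<alpha> assume "\<alpha> \<in> Fb"
        then have "M \<le> mdeg \<alpha>" using assms(6) Fb_def by auto
        then have "(of_real (t n) :: complex) ^ mdeg \<alpha> = of_real (t n) ^ M * of_real (t n) ^ (mdeg \<alpha> - M)"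
          by (metis le_add_diff_inverse power_add)
        then show "b \<alpha> * (of_real (t n) ^ (mdeg \<alpha>) * mon \<alpha> l) = of_real (t n) ^ M * (b \<alpha> * of_real (t n) ^ (mdeg \<alpha> - M) * mon \<alpha> l)"
          by (simp add: mult_ac)
      qed
      finally have eq: "peval b (\<chi> i. of_real (t n) * (q l)$i) = of_real (t n) ^ M * Fn n l" .
      have "peval b (\<chi> i. of_real (t n) * (q l)$i) \<noteq> 0"
      proof (rule Om, intro allI)
        fix i
        have "norm (1 - (z0$i + l * v$i)) < 1" using that S_def by auto
        then show "norm (1 - (\<chi> i. of_real (t n) * (q l)$i)$i) < 1"
          using disk_scale[OF _ tpos] by (simp add: q_def)
      qed
      then show ?thesis using eq by auto
    qed
    have holg: "g holomorphic_on A" for A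
      unfolding g_def mon_def by (intro holomorphic_intros)
    have holF: "Fn n holomorphic_on A" for n A
      unfolding Fn_def mon_def by (intro holomorphic_intros)
    have openS: "open S"
    proof -
      have "S = (\<Inter>i\<in>UNIV. {l. norm (1 - (z0$i + l * v$i)) < 1})" by (auto simp: S_def)
      moreover have "open {l. norm (1 - (z0$i + l * v$i)) < 1}" for i
        by (intro open_Collect_less continuous_intros)
      ultimately show ?thesis by auto
    qed
    have convS: "convex S"
      unfolding convex_def
    proof (intro ballI allI impI)
      fix x y :: complex and u v' :: real
      assume xy: "x \<in> S" "y \<in> S" and uv: "0 \<le> u" "0 \<le> v'" "u + v' = 1"
      show "u *\<^sub>R x + v' *\<^sub>R y \<in> S"
        unfolding S_def
      proof (intro CollectI allI)
        fix i
        have a: "norm (1 - (z0$i + x * v$i)) < 1" "norm (1 - (z0$i + y * v$i)) < 1"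
          using xy S_def by auto
        have "1 - (z0$i + (u *\<^sub>R x + v' *\<^sub>R y) * v$i)
            = of_real u * (1 - (z0$i + x * v$i)) + of_real v' * (1 - (z0$i + y * v$i))"
        proof -
          have u1: "of_real u + of_real v' = (1::complex)" using uv(3) by (metis of_real_1 of_real_add)
          have "of_real u * (1 - (z0$i + x * v$i)) + of_real v' * (1 - (z0$i + y * v$i))
              = (of_real u + of_real v') * (1 - z0$i) - (of_real u * x + of_real v' * y) * v$i"
            by (simp add: algebra_simps)
          also have "\<dots> = 1 - (z0$i + (u *\<^sub>R x + v' *\<^sub>R y) * v$i)"
            unfolding u1 by (simp add: scaleR_conv_of_real algebra_simps)
          finally show ?thesis by simp
        qed
        also have "norm \<dots> \<le> u * norm (1 - (z0$i + x * v$i)) + v' * norm (1 - (z0$i + y * v$i))"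
          by (rule order_trans[OF norm_triangle_ineq]) (simp add: norm_mult uv)
        also have "\<dots> < 1"
        proof (cases "u = 0")
          case True then show ?thesis using uv a by simp
        next
          case False
          then have "u * norm (1 - (z0$i + x * v$i)) < u" using a uv by simp
          moreover have "v' * norm (1 - (z0$i + y * v$i)) \<le> v'" using a uv
            by (simp add: mult_left_le)
          ultimately show ?thesis using uv by linarith
        qed
        finally show "norm (1 - (z0$i + (u *\<^sub>R x + v' *\<^sub>R y) * v$i)) < 1" .
      qed
    qed
    have S0: "0 \<in> S" using z0Om by (simp add: S_def)
    have ul: "uniform_limit K Fn g sequentially" if "compact K" "K \<subseteq> S" for K
    proof -
      define R where "R l = (\<Sum>\<alpha>\<in>Fb. norm (b \<alpha>) * norm (mon \<alpha> l))" for l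
      have "continuous_on K R" unfolding R_def mon_def by (intro continuous_intros)
      then obtain B where B: "B \<ge> 0" "\<And>l. l \<in> K \<Longrightarrow> norm (R l) \<le> B"
        using continuous_on_compact_bound[OF \<open>compact K\<close>] by blast
      have tnn: "0 \<le> t n" for n by (simp add: t_def)
      have termb: "norm ((b \<alpha> * of_real (t n) ^ (mdeg \<alpha> - M) - H \<alpha>) * mon \<alpha> l)
                  \<le> t n * (norm (b \<alpha>) * norm (mon \<alpha> l))" if "\<alpha> \<in> Fb" for \<alpha> n l
      proof (cases "mdeg \<alpha> = M")
        case True then show ?thesis by (simp add: H_def hom_part_def t_def)
      next
        case False
        then have k: "1 \<le> mdeg \<alpha> - M" using assms(6) that Fb_def by fastforce
        have H0: "H \<alpha> = 0" using False by (simp add: H_def hom_part_def)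
        have "t n ^ (mdeg \<alpha> - M) \<le> t n ^ 1"
          by (rule power_decreasing[OF k]) (auto simp: t_def)
        then have "norm ((of_real (t n) :: complex) ^ (mdeg \<alpha> - M)) \<le> t n"
          using tnn[of n] by (simp add: norm_power)
        then have "norm (b \<alpha>) * norm ((of_real (t n) :: complex) ^ (mdeg \<alpha> - M)) * norm (mon \<alpha> l)
             \<le> norm (b \<alpha>) * t n * norm (mon \<alpha> l)"
          by (intro mult_right_mono mult_left_mono) auto
        then show ?thesis using H0 by (simp add: norm_mult mult_ac)
      qed
      have bound: "dist (Fn n l) (g l) \<le> t n * B" if "l \<in> K" for n l
      proof -
        have "Fn n l - g l = (\<Sum>\<alpha>\<in>Fb. (b \<alpha> * of_real (t n) ^ (mdeg \<alpha> - M) - H \<alpha>) * mon \<alpha> l)"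
          unfolding Fn_def g_def sum_subtractf[symmetric] by (rule sum.cong) (simp_all add: algebra_simps)
        then have "dist (Fn n l) (g l) \<le> (\<Sum>\<alpha>\<in>Fb. norm ((b \<alpha> * of_real (t n) ^ (mdeg \<alpha> - M) - H \<alpha>) * mon \<alpha> l))"
          by (simp add: dist_norm norm_sum)
        also have "\<dots> \<le> (\<Sum>\<alpha>\<in>Fb. t n * (norm (b \<alpha>) * norm (mon \<alpha> l)))"
          by (rule sum_mono) (rule termb)
        also have "\<dots> = t n * R l" by (simp add: R_def sum_distrib_left)
        also have "\<dots> \<le> t n * B"
          using B(2)[OF that] by (intro mult_left_mono) (auto simp: t_def R_def)
        finally show ?thesis .
      qed
      show ?thesis
      proof (rule uniform_limitI)
        fix e :: real assume e: "e > 0"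
        obtain N :: nat where N: "(B + 1) / e < real N" using reals_Archimedean2 by blast
        show "\<forall>\<^sub>F n in sequentially. \<forall>l\<in>K. dist (Fn n l) (g l) < e"
          unfolding eventually_sequentially
        proof (intro exI allI impI ballI)
          fix n l assume "N \<le> n" "l \<in> K"
          have "t n * B < e"
          proof -
            have "B + 1 < e * real (Suc n)" using N e \<open>N \<le> n\<close>
            proof -
              have "B + 1 < real N * e" using N e by (simp add: divide_less_eq)
              also have "\<dots> \<le> real (Suc n) * e" using \<open>N \<le> n\<close> e by (intro mult_right_mono) auto
              finally show ?thesis by (simp add: mult.commute)
            qed
            then have "B < e * real (Suc n)" by simp
            then show ?thesis by (simp add: t_def field_simps)
          qed
          then show "dist (Fn n l) (g l) < e" using bound[OF \<open>l \<in> K\<close>, of n] by linarith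
        qed
      qed
    qed
    have nonconst: "\<not> g constant_on S"
    proof
      assume "g constant_on S"
      then obtain k where k: "\<forall>l\<in>S. g l = k" by (auto simp: constant_on_def)
      then have gS: "\<forall>l\<in>S. g l = 0" using g0 S0 by auto
      have "g 1 = 0"
      proof (rule analytic_continuation[of g UNIV S 0])
        show "0 islimpt S" using openS S0 by (simp add: interior_limit_point interior_open)
      qed (use holg gS in auto)
      then show False using g1 by simp
    qed
    have "g 0 \<noteq> 0"
      by (rule Hurwitz_no_zeros[OF openS convex_connected[OF convS] holF holg ul nonconst Fn_nz S0])
    then show False using g0 by simp
  qed
qed

end
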